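(* Let $(\mu,\nu)\in\boldsymbol{\mathcal P}$ and consider the RRU with initial composition $(x,y)\in\mathbb S$, $D_0=x+y\ge2\beta$. Let $Z_n=Z_0+M_n+A_n$ be the Doob decomposition of $Z_n$ with respect to $\{\mathcal A_n\}$ and $\langle M\rangle_n$ the bracket (predictable quadratic variation) process of $M$, with $\langle M\rangle_\infty=\lim_n\langle M\rangle_n$. Then for all $n\ge0$, $$\mathbb E\big(\langle M\rangle_\infty-\langle M\rangle_n\,\big|\,\mathcal A_n\big)\le\frac{\beta}{D_0}.$$
   Context: Fix $0<m_0\le\beta<\infty$. $\boldsymbol{\mathcal P}$: pairs $(\mu,\nu)$ of probability measures on $[0,\beta]$ with $\int k\,\mu(dk)=\int k\,\nu(dk)\ge m_0$. $\mathbb S=[0,\infty)^2\setminus\{(0,0)\}$. RRU: with $\{U_n\}$ i.i.d. uniform$[0,1]$ independent of i.i.d. $\{(V_n,W_n)\}$ with uniform$[0,1]$ marginals, $R_X(n)=q_\mu(V_n)$, $R_Y(n)=q_\nu(W_n)$, $X_0=x,Y_0=y$, $X_{n+1}=X_n+R_X(n+1)\mathbb I(n+1)$, $Y_{n+1}=Y_n+R_Y(n+1)(1-\mathbb I(n+1))$, $\mathbb I(n+1)=\mathbf 1\{U_{n+1}\le X_n/(X_n+Y_n)\}$; $D_n=X_n+Y_n$, $Z_n=X_n/D_n$; $\mathcal A_n=\sigma(\mathbb I(j),R_X(j),R_Y(j):j\le n)$. $M$ is the zero-mean martingale part ($M_0=0$) and $A$ the predictable part ($A_0=0$) of the Doob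 decomposition; $\langle M\rangle$ is the predictable increasing process with $\langle M\rangle_0=0$ such that $M_n^2-\langle M\rangle_n$ is a martingale. *)

theory Defs
  imports "HOL-Probability.Probability"
begin

definition quantile :: "real measure \<Rightarrow> real \<Rightarrow> real" where
  "quantile \<mu> v = Inf {k. v \<le> measure \<mu> {..k}}"

text \<open>Composition (X_n, Y_n) of the randomly reinforced urn. The random variables
  U, V, W are indexed from 1 (index 0 is unused).\<close>
primrec rru_state :: "real measure \<Rightarrow> real measure \<Rightarrow> (nat \<Rightarrow> 'a \<Rightarrow> real) \<Rightarrow>
    (nat \<Rightarrow> 'a \<Rightarrow> real) \<Rightarrow> (nat \<Rightarrow> 'a \<Rightarrow> real) \<Rightarrow> real \<Rightarrow> real \<Rightarrow> nat \<Rightarrow> 'a \<Rightarrow> real \<times> real"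
where
  "rru_state \<mu> \<nu> U V W x y 0 \<omega> = (x, y)"
| "rru_state \<mu> \<nu> U V W x y (Suc n) \<omega> =
     (let (Xn, Yn) = rru_state \<mu> \<nu> U V W x y n \<omega>;
          I = (if U (Suc n) \<omega> \<le> Xn / (Xn + Yn) then 1 else 0 :: real)
      in (Xn + quantile \<mu> (V (Suc n) \<omega>) * I, Yn + quantile \<nu> (W (Suc n) \<omega>) * (1 - I)))"

definition rru_I :: "real measure \<Rightarrow> real measure \<Rightarrow> (nat \<Rightarrow> 'a \<Rightarrow> real) \<Rightarrow>
    (nat \<Rightarrow> 'a \<Rightarrow> real) \<Rightarrow> (nat \<Rightarrow> 'a \<Rightarrow> real) \<Rightarrow> real \<Rightarrow> real \<Rightarrow> nat \<Rightarrow> 'a \<Rightarrow> real" where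
  "rru_I \<mu> \<nu> U V W x y n \<omega> =
     (let (Xp, Yp) = rru_state \<mu> \<nu> U V W x y (n - 1) \<omega>
      in if U n \<omega> \<le> Xp / (Xp + Yp) then 1 else 0)"

definition rru_filt :: "'a measure \<Rightarrow> real measure \<Rightarrow> real measure \<Rightarrow> (nat \<Rightarrow> 'a \<Rightarrow> real) \<Rightarrow>
    (nat \<Rightarrow> 'a \<Rightarrow> real) \<Rightarrow> (nat \<Rightarrow> 'a \<Rightarrow> real) \<Rightarrow> real \<Rightarrow> real \<Rightarrow> nat \<Rightarrow> 'a measure" where
  "rru_filt M \<mu> \<nu> U V W x y n = sigma (space M)
     (\<Union>j\<in>{1..n}. \<Union>f\<in>{rru_I \<mu> \<nu> U V W x y j, \<lambda>\<omega>. quantile \<mu> (V j \<omega>), \<lambda>\<omega>. quantile \<nu> (W j \<omega>)}.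
        {f -` B \<inter> space M | B. B \<in> sets borel})"

definition rru_Z :: "real measure \<Rightarrow> real measure \<Rightarrow> (nat \<Rightarrow> 'a \<Rightarrow> real) \<Rightarrow>
    (nat \<Rightarrow> 'a \<Rightarrow> real) \<Rightarrow> (nat \<Rightarrow> 'a \<Rightarrow> real) \<Rightarrow> real \<Rightarrow> real \<Rightarrow> nat \<Rightarrow> 'a \<Rightarrow> real" where
  "rru_Z \<mu> \<nu> U V W x y n \<omega> =
     (let (Xn, Yn) = rru_state \<mu> \<nu> U V W x y n \<omega> in Xn / (Xn + Yn))"

definition rru_A :: "'a measure \<Rightarrow> real measure \<Rightarrow> real measure \<Rightarrow> (nat \<Rightarrow> 'a \<Rightarrow> real) \<Rightarrow>
    (nat \<Rightarrow> 'a \<Rightarrow> real) \<Rightarrow> (nat \<Rightarrow> 'a \<Rightarrow> real) \<Rightarrow> real \<Rightarrow> real \<Rightarrow> nat \<Rightarrow> 'a \<Rightarrow> real" where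
  "rru_A M \<mu> \<nu> U V W x y n \<omega> =
     (\<Sum>j<n. real_cond_exp M (rru_filt M \<mu> \<nu> U V W x y j)
        (\<lambda>\<omega>'. rru_Z \<mu> \<nu> U V W x y (Suc j) \<omega>' - rru_Z \<mu> \<nu> U V W x y j \<omega>') \<omega>)"

definition rru_M :: "'a measure \<Rightarrow> real measure \<Rightarrow> real measure \<Rightarrow> (nat \<Rightarrow> 'a \<Rightarrow> real) \<Rightarrow>
    (nat \<Rightarrow> 'a \<Rightarrow> real) \<Rightarrow> (nat \<Rightarrow> 'a \<Rightarrow> real) \<Rightarrow> real \<Rightarrow> real \<Rightarrow> nat \<Rightarrow> 'a \<Rightarrow> real" where
  "rru_M M \<mu> \<nu> U V W x y n \<omega> =
     rru_Z \<mu> \<nu> U V W x y n \<omega> - rru_Z \<mu> \<nu> U V W x y 0 \<omega> - rru_A M \<mu> \<nu> U V W x y n \<omega>"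

definition rru_bracket :: "'a measure \<Rightarrow> real measure \<Rightarrow> real measure \<Rightarrow> (nat \<Rightarrow> 'a \<Rightarrow> real) \<Rightarrow>
    (nat \<Rightarrow> 'a \<Rightarrow> real) \<Rightarrow> (nat \<Rightarrow> 'a \<Rightarrow> real) \<Rightarrow> real \<Rightarrow> real \<Rightarrow> nat \<Rightarrow> 'a \<Rightarrow> real" where
  "rru_bracket M \<mu> \<nu> U V W x y n \<omega> =
     (\<Sum>j<n. real_cond_exp M (rru_filt M \<mu> \<nu> U V W x y j)
        (\<lambda>\<omega>'. (rru_M M \<mu> \<nu> U V W x y (Suc j) \<omega>' - rru_M M \<mu> \<nu> U V W x y j \<omega>')\<^sup>2) \<omega>)"

text \<open><M>_infinity = lim_n <M>_n, taken in [0,\<infinity>] (the process is increasing, so the limit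
  is the supremum).\<close>
definition rru_bracket_inf :: "'a measure \<Rightarrow> real measure \<Rightarrow> real measure \<Rightarrow> (nat \<Rightarrow> 'a \<Rightarrow> real) \<Rightarrow>
    (nat \<Rightarrow> 'a \<Rightarrow> real) \<Rightarrow> (nat \<Rightarrow> 'a \<Rightarrow> real) \<Rightarrow> real \<Rightarrow> real \<Rightarrow> 'a \<Rightarrow> ennreal" where
  "rru_bracket_inf M \<mu> \<nu> U V W x y \<omega> = (SUP n. ennreal (rru_bracket M \<mu> \<nu> U V W x y n \<omega>))"

end

theory Submission
  imports Defs
begin


lemma alg1:
  fixes X Y R b :: real
  assumes "X \<ge> 0" "Y \<ge> 0" "X + Y > 0" "0 \<le> R" "R \<le> b"
  shows "((X+R)/(X+Y+R) - X/(X+Y))\<^sup>2 \<le> b * (1/(X+Y) - 1/(X+Y+R))"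
proof -
  define D where "D = X + Y"
  have D: "D > 0" using assms D_def by simp
  have DR: "D + R > 0" using D assms by simp
  have e1: "(X+R)/(D+R) - X/D = R*Y/(D*(D+R))" using D DR unfolding D_def by (simp add: field_simps)
  have e2: "1/D - 1/(D+R) = R/(D*(D+R))" using D DR by (simp add: field_simps)
  have "(R*Y/(D*(D+R)))\<^sup>2 = (R/(D+R))\<^sup>2 * (Y/D)\<^sup>2" by (simp add: power_divide power_mult_distrib mult_ac)
  also have "\<dots> \<le> (R/(D+R))\<^sup>2 * 1"
    using D assms unfolding D_def by (intro mult_left_mono) (auto simp: power_le_one)
  also have "\<dots> = (R/(D+R)) * (R/(D+R))" by (simp add: power2_eq_square power_divide power_mult_distrib)
  also have "\<dots> \<le> (b/D) * (R/(D+R))"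
  proof (rule mult_right_mono)
    have "R * D \<le> b * D" using D assms by (intro mult_right_mono) auto
    also have "\<dots> \<le> b * (D + R)" using assms by (intro mult_left_mono) auto
    finally have "R * D \<le> b * (D+R)" .
    then show "R/(D+R) \<le> b/D" using D DR by (simp add: divide_simps)
    show "0 \<le> R/(D+R)" using DR assms by simp
  qed
  also have "\<dots> = b * (R/(D*(D+R)))" by simp
  finally show ?thesis using e1 e2 unfolding D_def by (simp add: add.assoc)
qed

lemma alg2:
  fixes X Y R b :: real
  assumes "X \<ge> 0" "Y \<ge> 0" "X + Y > 0" "0 \<le> R" "R \<le> b"
  shows "(X/(X+Y+R) - X/(X+Y))\<^sup>2 \<le> b * (1/(X+Y) - 1/(X+Y+R))"
proof -
  have "X/(X+Y+R) - X/(X+Y) = -((Y+R)/(Y+X+R) - Y/(Y+X))"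
    using assms by (simp add: field_simps)
  then have "(X/(X+Y+R) - X/(X+Y))\<^sup>2 = ((Y+R)/(Y+X+R) - Y/(Y+X))\<^sup>2" by (metis power2_minus)
  also have "\<dots> \<le> b * (1/(Y+X) - 1/(Y+X+R))" using alg1[of Y X R b] assms by simp
  finally show ?thesis by (simp add: add.commute add.left_commute)
qed

lemma quantile_low: "v \<le> 0 \<Longrightarrow> quantile \<mu> v = Inf UNIV"
proof -
  assume v: "v \<le> 0"
  have "v \<le> measure \<mu> {..k}" for k using v measure_nonneg[of \<mu> "{..k}"] by linarith
  then have "{k. v \<le> measure \<mu> {..k}} = UNIV" by blast
  then show ?thesis unfolding quantile_def by simp
qed

lemma quantile_high: "prob_space \<mu> \<Longrightarrow> v > 1 \<Longrightarrow> quantile \<mu> v = Inf {}"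
proof -
  assume p: "prob_space \<mu>" and v: "v > 1"
  have "\<not> v \<le> measure \<mu> {..k}" for k using v prob_space.prob_le_1[OF p, of "{..k}"] by linarith
  then have "{k. v \<le> measure \<mu> {..k}} = {}" by blast
  then show ?thesis unfolding quantile_def by simp
qed

lemma quantile_set_facts:
  fixes \<mu> :: "real measure" and b v :: real
  assumes "prob_space \<mu>" "sets \<mu> = sets borel" "measure \<mu> {0..b} = 1" "0 < v" "v \<le> 1"
  shows "b \<in> {k. v \<le> measure \<mu> {..k}}" "\<And>k. k \<in> {k. v \<le> measure \<mu> {..k}} \<Longrightarrow> 0 \<le> k"
proof -
  interpret prob_space \<mu> by fact
  have sp: "space \<mu> = UNIV" using assms(2) sets_eq_imp_space_eq[of \<mu> borel] by simp
  have "measure \<mu> {0..b} \<le> measure \<mu> {..b}"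
    by (intro finite_measure_mono) (auto simp: assms(2) atMost_borel)
  then show bS: "b \<in> {k. v \<le> measure \<mu> {..k}}" using assms by simp
  fix k assume k: "k \<in> {k. v \<le> measure \<mu> {..k}}"
  show "0 \<le> k"
  proof (rule ccontr)
    assume "\<not> 0 \<le> k"
    then have "{..k} \<subseteq> space \<mu> - {0..b}" by (auto simp: sp)
    then have "measure \<mu> {..k} \<le> measure \<mu> (space \<mu> - {0..b})"
      by (intro finite_measure_mono) (auto simp: assms(2) sp)
    also have "\<dots> = 0" using prob_compl[of "{0..b}"] assms by (simp add: assms(2))
    finally show False using k assms by simp
  qed
qed

lemma quantile_bounds:
  assumes "prob_space \<mu>" "sets \<mu> = sets borel" "measure \<mu> {0..b} = 1" "0 < v" "v \<le> 1"
  shows "0 \<le> quantile \<mu> v" "quantile \<mu> v \<le> b"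
proof -
  note f = quantile_set_facts[OF assms]
  show "quantile \<mu> v \<le> b" unfolding quantile_def
    by (rule cInf_lower[OF f(1)]) (use f(2) in \<open>auto simp: bdd_below_def\<close>)
  show "0 \<le> quantile \<mu> v" unfolding quantile_def
    by (rule cInf_greatest) (use f in auto)
qed

lemma quantile_mono:
  assumes "prob_space \<mu>" "sets \<mu> = sets borel" "measure \<mu> {0..b} = 1"
    and r: "0 < r" and rs: "r \<le> s" and s: "s \<le> 1"
  shows "quantile \<mu> r \<le> quantile \<mu> s"
proof -
  note fr = quantile_set_facts[OF assms(1-3) r order_trans[OF rs s]]
  note fs = quantile_set_facts[OF assms(1-3) order_less_le_trans[OF r rs] s]
  show ?thesis unfolding quantile_def
  proof (rule cInf_superset_mono)
    show "{k. s \<le> measure \<mu> {..k}} \<noteq> {}" using fs(1) by blast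
    show "bdd_below {k. r \<le> measure \<mu> {..k}}" unfolding bdd_below_def using fr(2) by blast
    show "{k. s \<le> measure \<mu> {..k}} \<subseteq> {k. r \<le> measure \<mu> {..k}}" using rs by auto
  qed
qed

lemma quantile_measurable:
  assumes "prob_space \<mu>" "sets \<mu> = sets borel" "measure \<mu> {0..b} = 1"
  shows "quantile \<mu> \<in> borel_measurable borel"
proof (rule borel_measurable_piecewise_mono[of "{{..0}, {0<..1}, {1<..}}"])
  show "countable {{..0::real}, {0<..1}, {1<..}}" by simp
  show "\<And>c. c \<in> {{..0::real}, {0<..1}, {1<..}} \<Longrightarrow> c \<in> sets borel" by auto
  show "\<Union> {{..0::real}, {0<..1}, {1<..}} = UNIV"
  proof (intro set_eqI iffI)
    fix z :: real
    show "z \<in> \<Union> {{..0::real}, {0<..1}, {1<..}}"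
    proof (cases "z \<le> 0")
      case True then show ?thesis by blast
    next
      case False
      show ?thesis
      proof (cases "z \<le> 1")
        case True then show ?thesis using False by auto
      next
        case F2: False then show ?thesis by auto
      qed
    qed
  qed simp
  fix c assume c: "c \<in> {{..0::real}, {0<..1}, {1<..}}"
  then consider "c = {..0}" | "c = {0<..1}" | "c = {1<..}" by blast
  then show "mono_on c (quantile \<mu>)"
  proof cases
    case 1 then show ?thesis by (intro mono_onI) (simp add: quantile_low)
  next
    case 2 then show ?thesis by (intro mono_onI) (auto intro: quantile_mono[OF assms])
  next
    case 3 then show ?thesis by (intro mono_onI) (simp add: quantile_high[OF assms(1)])
  qed
qed



locale rru =
  fixes M :: "'a measure" and \<mu> \<nu> :: "real measure" and U V W :: "nat \<Rightarrow> 'a \<Rightarrow> real"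
    and \<beta> x y :: real
  assumes M: "prob_space M"
    and mu: "prob_space \<mu>" "sets \<mu> = sets borel" "measure \<mu> {0..\<beta>} = 1"
    and nu: "prob_space \<nu>" "sets \<nu> = sets borel" "measure \<nu> {0..\<beta>} = 1"
    and Um[measurable]: "\<And>i. U i \<in> borel_measurable M"
    and Vm[measurable]: "\<And>i. V i \<in> borel_measurable M"
    and Wm[measurable]: "\<And>i. W i \<in> borel_measurable M"
    and Vd: "\<And>i. distr M borel (V i) = uniform_measure lborel {0..1}"
    and Wd: "\<And>i. distr M borel (W i) = uniform_measure lborel {0..1}"
    and xy: "0 \<le> x" "0 \<le> y" "0 < \<beta>" "2 * \<beta> \<le> x + y"
begin

sublocale prob_space M by (rule M)

abbreviation "st n \<omega> \<equiv> rru_state \<mu> \<nu> U V W x y n \<omega>"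
abbreviation "qV j \<omega> \<equiv> quantile \<mu> (V j \<omega>)"
abbreviation "qW j \<omega> \<equiv> quantile \<nu> (W j \<omega>)"
abbreviation "Z n \<equiv> rru_Z \<mu> \<nu> U V W x y n"
abbreviation "F n \<equiv> rru_filt M \<mu> \<nu> U V W x y n"
definition "D n \<omega> = fst (st n \<omega>) + snd (st n \<omega>)"
definition "good \<omega> \<longleftrightarrow> (\<forall>j. 0 \<le> qV j \<omega> \<and> qV j \<omega> \<le> \<beta> \<and> 0 \<le> qW j \<omega> \<and> qW j \<omega> \<le> \<beta>)"

lemma st_Suc: "st (Suc n) \<omega> =
  (let I = (if U (Suc n) \<omega> \<le> fst (st n \<omega>) / (fst (st n \<omega>) + snd (st n \<omega>)) then 1 else 0 :: real)
   in (fst (st n \<omega>) + qV (Suc n) \<omega> * I, snd (st n \<omega>) + qW (Suc n) \<omega> * (1 - I)))"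
  by (simp add: split_beta Let_def)

lemma Z_eq: "Z n \<omega> = fst (st n \<omega>) / D n \<omega>"
  by (simp add: rru_Z_def D_def split_beta)

lemma st_good:
  assumes "good \<omega>"
  shows "0 \<le> fst (st n \<omega>) \<and> 0 \<le> snd (st n \<omega>) \<and> x + y \<le> D n \<omega>"
proof (induction n)
  case 0 then show ?case using xy by (simp add: D_def)
next
  case (Suc n)
  have q: "0 \<le> qV (Suc n) \<omega>" "0 \<le> qW (Suc n) \<omega>" using assms unfolding good_def by auto
  show ?case using Suc q unfolding D_def st_Suc Let_def by auto
qed

lemma D_pos: "good \<omega> \<Longrightarrow> 0 < D n \<omega>"
  using st_good[of \<omega> n] xy by linarith

lemma dZ_bound:
  assumes g: "good \<omega>"
  shows "(Z (Suc n) \<omega> - Z n \<omega>)\<^sup>2 \<le> \<beta> * (1 / D n \<omega> - 1 / D (Suc n) \<omega>)"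
proof -
  obtain X Y where XYd: "st n \<omega> = (X, Y)" by (cases "st n \<omega>")
  have XY: "0 \<le> X" "0 \<le> Y" "0 < X + Y" using st_good[OF g, of n] D_pos[OF g, of n]
    unfolding D_def XYd by auto
  have q: "0 \<le> qV (Suc n) \<omega>" "qV (Suc n) \<omega> \<le> \<beta>" "0 \<le> qW (Suc n) \<omega>" "qW (Suc n) \<omega> \<le> \<beta>"
    using g unfolding good_def by auto
  have Dn: "D n \<omega> = X + Y" by (simp only: D_def XYd fst_conv snd_conv)
  have Zn: "Z n \<omega> = X / (X + Y)" by (simp only: Z_eq Dn XYd fst_conv)
  have sS: "st (Suc n) \<omega> = (let I = (if U (Suc n) \<omega> \<le> X / (X + Y) then 1 else 0 :: real)
   in (X + qV (Suc n) \<omega> * I, Y + qW (Suc n) \<omega> * (1 - I)))"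
    by (simp only: st_Suc XYd fst_conv snd_conv)
  show ?thesis
  proof (cases "U (Suc n) \<omega> \<le> X / (X + Y)")
    case True
    have s: "st (Suc n) \<omega> = (X + qV (Suc n) \<omega>, Y)" unfolding sS Let_def
      using True by simp
    have "D (Suc n) \<omega> = X + Y + qV (Suc n) \<omega>" by (simp only: D_def s fst_conv snd_conv)
    moreover have "Z (Suc n) \<omega> = (X + qV (Suc n) \<omega>) / (X + Y + qV (Suc n) \<omega>)"
      by (simp only: Z_eq calculation s fst_conv)
    ultimately show ?thesis using alg1[OF XY q(1,2)] Dn Zn by simp
  next
    case False
    have s: "st (Suc n) \<omega> = (X, Y + qW (Suc n) \<omega>)" unfolding sS Let_def
      using False by simp
    have "D (Suc n) \<omega> = X + Y + qW (Suc n) \<omega>" by (simp only: D_def s fst_conv snd_conv add.assoc)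
    moreover have "Z (Suc n) \<omega> = X / (X + Y + qW (Suc n) \<omega>)"
      by (simp only: Z_eq calculation s fst_conv)
    ultimately show ?thesis using alg2[OF XY q(3,4)] Dn Zn by simp
  qed
qed

lemma sum_dZ:
  assumes g: "good \<omega>"
  shows "(\<Sum>k<m. (Z (Suc (n + k)) \<omega> - Z (n + k) \<omega>)\<^sup>2) \<le> \<beta> * (1 / D n \<omega> - 1 / D (n + m) \<omega>)"
proof (induction m)
  case 0 then show ?case by simp
next
  case (Suc m)
  have "(\<Sum>k<Suc m. (Z (Suc (n + k)) \<omega> - Z (n + k) \<omega>)\<^sup>2)
      = (\<Sum>k<m. (Z (Suc (n + k)) \<omega> - Z (n + k) \<omega>)\<^sup>2) + (Z (Suc (n + m)) \<omega> - Z (n + m) \<omega>)\<^sup>2" by simp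
  also have "\<dots> \<le> \<beta> * (1 / D n \<omega> - 1 / D (n + m) \<omega>) + \<beta> * (1 / D (n + m) \<omega> - 1 / D (Suc (n + m)) \<omega>)"
    using Suc dZ_bound[OF g, of "n + m"] by linarith
  also have "\<dots> = \<beta> * (1 / D n \<omega> - 1 / D (n + Suc m) \<omega>)" by (simp add: algebra_simps)
  finally show ?case .
qed

lemma sum_dZ_le:
  assumes g: "good \<omega>"
  shows "(\<Sum>k<m. (Z (Suc (n + k)) \<omega> - Z (n + k) \<omega>)\<^sup>2) \<le> \<beta> / (x + y)"
proof -
  have "0 < x + y" using xy by linarith
  have "1 / D n \<omega> \<le> 1 / (x + y)" using st_good[OF g, of n] \<open>0 < x + y\<close> by (intro divide_left_mono) auto
  moreover have "0 \<le> 1 / D (n + m) \<omega>" using D_pos[OF g] by (simp add: less_imp_le)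
  ultimately have "1 / D n \<omega> - 1 / D (n + m) \<omega> \<le> 1 / (x + y)" by linarith
  then have "\<beta> * (1 / D n \<omega> - 1 / D (n + m) \<omega>) \<le> \<beta> * (1 / (x + y))"
    using xy by (intro mult_left_mono) auto
  then show ?thesis using sum_dZ[OF g, where m=m and n=n] by simp
qed

lemma Z_01: "good \<omega> \<Longrightarrow> 0 \<le> Z n \<omega> \<and> Z n \<omega> \<le> 1"
  using st_good[of \<omega> n] D_pos[of \<omega> n] by (auto simp: Z_eq D_def)

lemma qV_meas[measurable]: "qV j \<in> borel_measurable M"
  using measurable_compose[OF Vm quantile_measurable[OF mu]] by (simp add: comp_def)
lemma qW_meas[measurable]: "qW j \<in> borel_measurable M"
  using measurable_compose[OF Wm quantile_measurable[OF nu]] by (simp add: comp_def)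

lemma st_meas: "(\<lambda>\<omega>. fst (st n \<omega>)) \<in> borel_measurable M \<and> (\<lambda>\<omega>. snd (st n \<omega>)) \<in> borel_measurable M"
proof (induction n)
  case 0 then show ?case by simp
next
  case (Suc n)
  then have [measurable]: "(\<lambda>\<omega>. fst (st n \<omega>)) \<in> borel_measurable M" "(\<lambda>\<omega>. snd (st n \<omega>)) \<in> borel_measurable M"
    by auto
  show ?case unfolding st_Suc Let_def by simp measurable
qed

lemma st_fst_meas[measurable]: "(\<lambda>\<omega>. fst (st n \<omega>)) \<in> borel_measurable M" using st_meas by blast
lemma st_snd_meas[measurable]: "(\<lambda>\<omega>. snd (st n \<omega>)) \<in> borel_measurable M" using st_meas by blast

lemma Z_meas[measurable]: "Z n \<in> borel_measurable M"
  unfolding rru_Z_def split_beta Let_def by measurable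

lemma I_meas[measurable]: "rru_I \<mu> \<nu> U V W x y n \<in> borel_measurable M"
  unfolding rru_I_def split_beta Let_def by measurable

lemma AE_good: "AE \<omega> in M. good \<omega>"
proof -
  have u: "AE v in uniform_measure lborel {0..1::real}. 0 < v \<and> v \<le> 1"
    by (subst AE_uniform_measure) (auto intro: AE_mp[OF AE_lborel_singleton[of 0]])
  have "AE \<omega> in M. 0 < V j \<omega> \<and> V j \<omega> \<le> 1" for j
    using u unfolding Vd[symmetric, of j] by (subst (asm) AE_distr_iff) auto
  moreover have "AE \<omega> in M. 0 < W j \<omega> \<and> W j \<omega> \<le> 1" for j
    using u unfolding Wd[symmetric, of j] by (subst (asm) AE_distr_iff) auto
  ultimately have "AE \<omega> in M. \<forall>j. (0 < V j \<omega> \<and> V j \<omega> \<le> 1) \<and> (0 < W j \<omega> \<and> W j \<omega> \<le> 1)"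
    by (simp add: AE_all_countable)
  then show ?thesis
    by eventually_elim (auto simp: good_def intro: quantile_bounds[OF mu] quantile_bounds[OF nu])
qed

end


context rru begin

definition "G n = (\<Union>j\<in>{1..n}. \<Union>f\<in>{rru_I \<mu> \<nu> U V W x y j, \<lambda>\<omega>. quantile \<mu> (V j \<omega>), \<lambda>\<omega>. quantile \<nu> (W j \<omega>)}.
        {f -` B \<inter> space M | B. B \<in> sets borel})"

lemma G_sub: "G n \<subseteq> sets M"
proof -
  have "f -` B \<inter> space M \<in> sets M" if "f \<in> borel_measurable M" "B \<in> sets borel" for f :: "'a \<Rightarrow> real" and B
    using measurable_sets[OF that] .
  then show ?thesis unfolding G_def using I_meas qV_meas qW_meas by fastforce
qed

lemma sets_F: "sets (F n) = sigma_sets (space M) (G n)"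
  unfolding rru_filt_def G_def[symmetric]
  by (rule sets_measure_of) (use G_sub sets.sets_into_space in blast)

lemma space_F: "space (F n) = space M"
  unfolding rru_filt_def by (simp add: space_measure_of_conv)

lemma subalg: "subalgebra M (F n)"
  unfolding subalgebra_def sets_F space_F using sets.sigma_sets_subset[OF G_sub] by simp

lemma F_mono: "n \<le> m \<Longrightarrow> sets (F n) \<subseteq> sets (F m)"
  unfolding sets_F by (rule sigma_sets_mono') (unfold G_def, rule UN_mono, auto)

lemma sfs: "sigma_finite_subalgebra M (F n)"
proof -
  interpret finite_measure_subalgebra M "F n" by unfold_locales (rule subalg)
  show ?thesis by (rule sigma_finite_subalgebra_axioms)
qed

abbreviation "dZ j \<omega> \<equiv> Z (Suc j) \<omega> - Z j \<omega>"
abbreviation "eZ j \<equiv> real_cond_exp M (F j) (dZ j)"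
abbreviation "MM n \<equiv> rru_M M \<mu> \<nu> U V W x y n"
abbreviation "cc j \<equiv> real_cond_exp M (F j) (\<lambda>\<omega>. (MM (Suc j) \<omega> - MM j \<omega>)\<^sup>2)"

lemma dM: "MM (Suc j) \<omega> - MM j \<omega> = dZ j \<omega> - eZ j \<omega>"
  by (simp add: rru_M_def rru_A_def)

lemma dZ_AE: "AE \<omega> in M. \<bar>dZ j \<omega>\<bar> \<le> 1"
  using AE_good
proof eventually_elim
  case (elim \<omega>)
  then show ?case using Z_01[OF elim, of j] Z_01[OF elim, of "Suc j"] by (simp only: abs_le_iff) linarith
qed

lemma dZ_int: "integrable M (dZ j)"
proof (rule integrable_const_bound[where B=1])
  show "AE \<omega> in M. norm (dZ j \<omega>) \<le> 1" using dZ_AE[of j] by simp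
qed measurable

lemma eZ_AE: "AE \<omega> in M. \<bar>eZ j \<omega>\<bar> \<le> 1"
proof -
  interpret sigma_finite_subalgebra M "F j" by (rule sfs)
  have "AE \<omega> in M. eZ j \<omega> \<le> 1"
    by (rule real_cond_exp_le_c[OF dZ_int]) (use dZ_AE[of j] in \<open>eventually_elim, simp add: abs_le_iff\<close>)
  moreover have "AE \<omega> in M. eZ j \<omega> \<ge> -1"
    by (rule real_cond_exp_ge_c[OF dZ_int]) (use dZ_AE[of j] in \<open>eventually_elim, simp add: abs_le_iff\<close>)
  ultimately show ?thesis by eventually_elim simp
qed

lemma sq_le4: "\<bar>a\<bar> \<le> 1 \<Longrightarrow> \<bar>b\<bar> \<le> 1 \<Longrightarrow> (a - b)\<^sup>2 \<le> (4::real)"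
proof -
  assume "\<bar>a\<bar> \<le> 1" "\<bar>b\<bar> \<le> 1"
  then have "\<bar>a - b\<bar> \<le> 2" by linarith
  then have "\<bar>a - b\<bar>\<^sup>2 \<le> 2\<^sup>2" by (intro power_mono) auto
  then show ?thesis by simp
qed

lemma prod_le1: "\<bar>a\<bar> \<le> 1 \<Longrightarrow> \<bar>b\<bar> \<le> 1 \<Longrightarrow> \<bar>a * b\<bar> \<le> (1::real)"
  by (simp add: abs_mult mult_le_one)

lemma h_eq: "(\<lambda>\<omega>. (MM (Suc j) \<omega> - MM j \<omega>)\<^sup>2) = (\<lambda>\<omega>. (dZ j \<omega> - eZ j \<omega>)\<^sup>2)"
  by (simp add: dM)

lemma h_meas[measurable]: "(\<lambda>\<omega>. (MM (Suc j) \<omega> - MM j \<omega>)\<^sup>2) \<in> borel_measurable M"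
  unfolding h_eq by measurable

lemma h_int: "integrable M (\<lambda>\<omega>. (MM (Suc j) \<omega> - MM j \<omega>)\<^sup>2)"
proof (rule integrable_const_bound[where B=4])
  show "AE \<omega> in M. norm ((MM (Suc j) \<omega> - MM j \<omega>)\<^sup>2) \<le> 4"
    using dZ_AE[of j] eZ_AE[of j] by eventually_elim (simp add: dM sq_le4)
qed measurable

lemma cc_nonneg: "AE \<omega> in M. 0 \<le> cc j \<omega>"
proof -
  interpret sigma_finite_subalgebra M "F j" by (rule sfs)
  show ?thesis by (rule real_cond_exp_pos) auto
qed

lemma step_ineq:
  assumes A: "A \<in> sets (F j)"
  shows "(\<integral>\<omega>. indicator A \<omega> * cc j \<omega> \<partial>M) \<le> (\<integral>\<omega>. indicator A \<omega> * (dZ j \<omega>)\<^sup>2 \<partial>M)"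
proof -
  interpret sigma_finite_subalgebra M "F j" by (rule sfs)
  have [measurable]: "A \<in> sets (F j)" by (rule A)
  have AM[measurable]: "A \<in> sets M" using subalg A unfolding subalgebra_def by blast
  have indF[measurable]: "indicator A \<in> borel_measurable (F j)" by measurable
  have ind_le: "\<bar>indicator A \<omega>\<bar> \<le> (1::real)" for \<omega> by (simp add: indicator_def)
  have bnd: "AE \<omega> in M. \<bar>dZ j \<omega>\<bar> \<le> 1 \<and> \<bar>eZ j \<omega>\<bar> \<le> 1"
    using dZ_AE[of j] eZ_AE[of j] by eventually_elim simp
  let ?h = "\<lambda>\<omega>. (MM (Suc j) \<omega> - MM j \<omega>)\<^sup>2"
  have i1: "integrable M (\<lambda>\<omega>. indicator A \<omega> * ?h \<omega>)"
    using integrable_mult_indicator[OF AM h_int] by simp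
  have e1: "(\<integral>\<omega>. indicator A \<omega> * cc j \<omega> \<partial>M) = (\<integral>\<omega>. indicator A \<omega> * ?h \<omega> \<partial>M)"
    by (rule real_cond_exp_intg(2)[OF i1 indF]) measurable
  have i2: "integrable M (\<lambda>\<omega>. (indicator A \<omega> * eZ j \<omega>) * dZ j \<omega>)"
  proof (rule integrable_const_bound[where B=1])
    show "AE \<omega> in M. norm (indicator A \<omega> * eZ j \<omega> * dZ j \<omega>) \<le> 1"
      using bnd by eventually_elim (auto simp: indicator_def abs_mult mult_le_one)
  qed measurable
  have e2: "(\<integral>\<omega>. (indicator A \<omega> * eZ j \<omega>) * eZ j \<omega> \<partial>M) = (\<integral>\<omega>. (indicator A \<omega> * eZ j \<omega>) * dZ j \<omega> \<partial>M)"
    by (rule real_cond_exp_intg(2)[OF i2]) measurable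
  have i3: "integrable M (\<lambda>\<omega>. indicator A \<omega> * (dZ j \<omega>)\<^sup>2)"
  proof (rule integrable_const_bound[where B=1])
    show "AE \<omega> in M. norm (indicator A \<omega> * (dZ j \<omega>)\<^sup>2) \<le> 1"
      using bnd by eventually_elim (auto simp: indicator_def abs_square_le_1)
  qed measurable
  have i4: "integrable M (\<lambda>\<omega>. (indicator A \<omega> * eZ j \<omega>) * eZ j \<omega>)"
  proof (rule integrable_const_bound[where B=1])
    show "AE \<omega> in M. norm (indicator A \<omega> * eZ j \<omega> * eZ j \<omega>) \<le> 1"
      using bnd by eventually_elim (auto simp: indicator_def abs_mult mult_le_one)
  qed measurable
  have pw: "indicator A \<omega> * ?h \<omega> = indicator A \<omega> * (dZ j \<omega>)\<^sup>2 - 2 * ((indicator A \<omega> * eZ j \<omega>) * dZ j \<omega>)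
      + (indicator A \<omega> * eZ j \<omega>) * eZ j \<omega>" for \<omega>
    by (simp add: dM power2_eq_square algebra_simps)
  have "(\<integral>\<omega>. indicator A \<omega> * ?h \<omega> \<partial>M) = (\<integral>\<omega>. indicator A \<omega> * (dZ j \<omega>)\<^sup>2 \<partial>M)
      - 2 * (\<integral>\<omega>. (indicator A \<omega> * eZ j \<omega>) * dZ j \<omega> \<partial>M) + (\<integral>\<omega>. (indicator A \<omega> * eZ j \<omega>) * eZ j \<omega> \<partial>M)"
    unfolding pw using i2 i3 i4 by simp
  also have "\<dots> = (\<integral>\<omega>. indicator A \<omega> * (dZ j \<omega>)\<^sup>2 \<partial>M) - (\<integral>\<omega>. (indicator A \<omega> * eZ j \<omega>) * eZ j \<omega> \<partial>M)"
    using e2 by simp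
  also have "\<dots> \<le> (\<integral>\<omega>. indicator A \<omega> * (dZ j \<omega>)\<^sup>2 \<partial>M)"
  proof -
    have "0 \<le> (\<integral>\<omega>. (indicator A \<omega> * eZ j \<omega>) * eZ j \<omega> \<partial>M)"
      by (intro integral_nonneg_AE AE_I2) (simp add: indicator_def)
    then show ?thesis by simp
  qed
  finally show ?thesis using e1 by simp
qed

end


context rru begin

lemma cc_int: "integrable M (cc j)"
proof -
  interpret sigma_finite_subalgebra M "F j" by (rule sfs)
  show ?thesis by (rule real_cond_exp_int(1)[OF h_int])
qed

lemma dZ2_int: "integrable M (\<lambda>\<omega>. (dZ j \<omega>)\<^sup>2)"
proof (rule integrable_const_bound[where B=1])
  show "AE \<omega> in M. norm ((dZ j \<omega>)\<^sup>2) \<le> 1" using dZ_AE[of j] by eventually_elim (simp add: abs_square_le_1)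
qed measurable

lemma nn_step:
  assumes A: "A \<in> sets (F n)" and nj: "n \<le> j"
  shows "(\<integral>\<^sup>+\<omega>. ennreal (cc j \<omega>) * indicator A \<omega> \<partial>M) \<le> (\<integral>\<^sup>+\<omega>. ennreal ((dZ j \<omega>)\<^sup>2) * indicator A \<omega> \<partial>M)"
proof -
  have AF: "A \<in> sets (F j)" using F_mono[OF nj] A by blast
  have AM[measurable]: "A \<in> sets M" using subalg AF unfolding subalgebra_def by blast
  have pw1: "ennreal (cc j \<omega>) * indicator A \<omega> = ennreal (indicator A \<omega> * cc j \<omega>)" for \<omega>
    by (cases "\<omega> \<in> A") simp_all
  have pw2: "ennreal ((dZ j \<omega>)\<^sup>2) * indicator A \<omega> = ennreal (indicator A \<omega> * (dZ j \<omega>)\<^sup>2)" for \<omega>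
    by (cases "\<omega> \<in> A") simp_all
  have i1: "integrable M (\<lambda>\<omega>. indicator A \<omega> * cc j \<omega>)"
    using integrable_mult_indicator[OF AM cc_int] by simp
  have i2: "integrable M (\<lambda>\<omega>. indicator A \<omega> * (dZ j \<omega>)\<^sup>2)"
    using integrable_mult_indicator[OF AM dZ2_int] by simp
  have "(\<integral>\<^sup>+\<omega>. ennreal (cc j \<omega>) * indicator A \<omega> \<partial>M) = ennreal (\<integral>\<omega>. indicator A \<omega> * cc j \<omega> \<partial>M)"
    unfolding pw1 by (rule nn_integral_eq_integral[OF i1]) (use cc_nonneg[of j] in \<open>eventually_elim, simp add: indicator_def\<close>)
  also have "\<dots> \<le> ennreal (\<integral>\<omega>. indicator A \<omega> * (dZ j \<omega>)\<^sup>2 \<partial>M)"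
    by (rule ennreal_leI[OF step_ineq[OF AF]])
  also have "\<dots> = (\<integral>\<^sup>+\<omega>. ennreal ((dZ j \<omega>)\<^sup>2) * indicator A \<omega> \<partial>M)"
    unfolding pw2 by (rule nn_integral_eq_integral[OF i2, symmetric]) (simp add: indicator_def)
  finally show ?thesis .
qed

abbreviation "Br n \<equiv> rru_bracket M \<mu> \<nu> U V W x y n"
abbreviation "Binf \<equiv> rru_bracket_inf M \<mu> \<nu> U V W x y"

lemma f_le: "AE \<omega> in M. Binf \<omega> - ennreal (Br n \<omega>) \<le> (\<Sum>k. ennreal (cc (n + k) \<omega>))"
proof -
  have "AE \<omega> in M. \<forall>j. 0 \<le> cc j \<omega>" using cc_nonneg by (simp add: AE_all_countable)
  then show ?thesis
  proof eventually_elim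
    case (elim \<omega>)
    have br: "ennreal (Br m \<omega>) = (\<Sum>j<m. ennreal (cc j \<omega>))" for m
      unfolding rru_bracket_def using elim by (simp add: sum_ennreal)
    have "Binf \<omega> = (\<Sum>j. ennreal (cc j \<omega>))"
      unfolding rru_bracket_inf_def br by (simp add: suminf_eq_SUP)
    also have "\<dots> = (\<Sum>k. ennreal (cc (k + n) \<omega>)) + (\<Sum>j<n. ennreal (cc j \<omega>))"
      by (rule suminf_offset) simp
    finally have "Binf \<omega> - ennreal (Br n \<omega>) = (\<Sum>k. ennreal (cc (k + n) \<omega>))"
      unfolding br[of n] by simp
    then show ?case by (simp add: add.commute)
  qed
qed

lemma main_int:
  assumes A: "A \<in> sets (F n)"
  shows "(\<integral>\<^sup>+\<omega>. (Binf \<omega> - ennreal (Br n \<omega>)) * indicator A \<omega> \<partial>M) \<le> ennreal (\<beta> / (x + y)) * emeasure M A"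
proof -
  have AM[measurable]: "A \<in> sets M" using subalg A unfolding subalgebra_def by blast
  have "(\<integral>\<^sup>+\<omega>. (Binf \<omega> - ennreal (Br n \<omega>)) * indicator A \<omega> \<partial>M)
      \<le> (\<integral>\<^sup>+\<omega>. (\<Sum>k. ennreal (cc (n + k) \<omega>)) * indicator A \<omega> \<partial>M)"
  proof (rule nn_integral_mono_AE)
    show "AE \<omega> in M. (Binf \<omega> - ennreal (Br n \<omega>)) * indicator A \<omega> \<le> (\<Sum>k. ennreal (cc (n + k) \<omega>)) * indicator A \<omega>"
      using f_le[of n] by eventually_elim (rule mult_right_mono, auto)
  qed
  also have "\<dots> = (\<integral>\<^sup>+\<omega>. (\<Sum>k. ennreal (cc (n + k) \<omega>) * indicator A \<omega>) \<partial>M)"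
    by simp
  also have "\<dots> = (\<Sum>k. \<integral>\<^sup>+\<omega>. ennreal (cc (n + k) \<omega>) * indicator A \<omega> \<partial>M)"
    by (rule nn_integral_suminf) measurable
  also have "\<dots> \<le> (\<Sum>k. \<integral>\<^sup>+\<omega>. ennreal ((dZ (n + k) \<omega>)\<^sup>2) * indicator A \<omega> \<partial>M)"
    by (rule suminf_le) (auto intro: nn_step[OF A])
  also have "\<dots> = (\<integral>\<^sup>+\<omega>. (\<Sum>k. ennreal ((dZ (n + k) \<omega>)\<^sup>2) * indicator A \<omega>) \<partial>M)"
    by (rule nn_integral_suminf[symmetric]) measurable
  also have "\<dots> \<le> (\<integral>\<^sup>+\<omega>. ennreal (\<beta> / (x + y)) * indicator A \<omega> \<partial>M)"
  proof (rule nn_integral_mono_AE)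
    show "AE \<omega> in M. (\<Sum>k. ennreal ((dZ (n + k) \<omega>)\<^sup>2) * indicator A \<omega>) \<le> ennreal (\<beta> / (x + y)) * indicator A \<omega>"
      using AE_good
    proof eventually_elim
      case (elim \<omega>)
      have "(\<Sum>k. ennreal ((dZ (n + k) \<omega>)\<^sup>2)) = (SUP m. \<Sum>k<m. ennreal ((dZ (n + k) \<omega>)\<^sup>2))"
        by (rule suminf_eq_SUP)
      also have "\<dots> \<le> ennreal (\<beta> / (x + y))"
      proof (rule SUP_least)
        fix m
        have "(\<Sum>k<m. ennreal ((dZ (n + k) \<omega>)\<^sup>2)) = ennreal (\<Sum>k<m. (dZ (n + k) \<omega>)\<^sup>2)"
          by (simp add: sum_ennreal)
        also have "\<dots> \<le> ennreal (\<beta> / (x + y))"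
          by (rule ennreal_leI) (use sum_dZ_le[OF elim, where m=m and n=n] in simp)
        finally show "(\<Sum>k<m. ennreal ((dZ (n + k) \<omega>)\<^sup>2)) \<le> ennreal (\<beta> / (x + y))" .
      qed
      finally show ?case by (simp add: mult_right_mono)
    qed
  qed
  also have "\<dots> = ennreal (\<beta> / (x + y)) * emeasure M A"
    by (simp add: nn_integral_cmult_indicator)
  finally show ?thesis .
qed

lemma final: "AE \<omega> in M. nn_cond_exp M (F n) (\<lambda>\<omega>'. Binf \<omega>' - ennreal (Br n \<omega>')) \<omega> \<le> ennreal (\<beta> / (x + y))"
proof -
  interpret sigma_finite_subalgebra M "F n" by (rule sfs)
  define C where "C = ennreal (\<beta> / (x + y))"
  define f where "f = (\<lambda>\<omega>'. Binf \<omega>' - ennreal (Br n \<omega>'))"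
  define h where "h = nn_cond_exp M (F n) f"
  have fm[measurable]: "f \<in> borel_measurable M"
    unfolding f_def rru_bracket_inf_def rru_bracket_def by measurable
  have hF[measurable]: "h \<in> borel_measurable (F n)" unfolding h_def by measurable
  have hM[measurable]: "h \<in> borel_measurable M" unfolding h_def by measurable
  define A where "A = {\<omega> \<in> space M. C < h \<omega>}"
  have AF: "A \<in> sets (F n)"
  proof -
    have "{\<omega> \<in> space (F n). C < h \<omega>} \<in> sets (F n)" by measurable
    then show ?thesis unfolding A_def space_F .
  qed
  have AM[measurable]: "A \<in> sets M" using subalg AF unfolding subalgebra_def by blast
  have eqi: "(\<integral>\<^sup>+\<omega>. indicator A \<omega> * h \<omega> \<partial>M) = (\<integral>\<^sup>+\<omega>. indicator A \<omega> * f \<omega> \<partial>M)"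
    unfolding h_def by (rule nn_cond_exp_intg) (use AF in measurable)
  have le: "(\<integral>\<^sup>+\<omega>. indicator A \<omega> * f \<omega> \<partial>M) \<le> C * emeasure M A"
    using main_int[OF AF] unfolding f_def C_def by (simp add: mult.commute)
  have "AE \<omega> in M. h \<omega> * indicator A \<omega> \<le> C * indicator A \<omega>"
  proof (rule ccontr)
    assume nAE: "\<not> (AE \<omega> in M. h \<omega> * indicator A \<omega> \<le> C * indicator A \<omega>)"
    have "(\<integral>\<^sup>+\<omega>. C * indicator A \<omega> \<partial>M) < (\<integral>\<^sup>+\<omega>. h \<omega> * indicator A \<omega> \<partial>M)"
    proof (rule nn_integral_less)
      show "(\<integral>\<^sup>+\<omega>. C * indicator A \<omega> \<partial>M) \<noteq> \<infinity>"
        by (simp add: nn_integral_cmult_indicator C_def ennreal_mult_eq_top_iff)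
      show "AE \<omega> in M. C * indicator A \<omega> \<le> h \<omega> * indicator A \<omega>"
        by (rule AE_I2) (auto simp: A_def indicator_def less_imp_le)
      show "\<not> (AE \<omega> in M. h \<omega> * indicator A \<omega> \<le> C * indicator A \<omega>)" by (rule nAE)
    qed measurable
    also have "\<dots> = (\<integral>\<^sup>+\<omega>. indicator A \<omega> * f \<omega> \<partial>M)" using eqi by (simp add: mult.commute)
    also have "\<dots> \<le> C * emeasure M A" by (rule le)
    also have "\<dots> = (\<integral>\<^sup>+\<omega>. C * indicator A \<omega> \<partial>M)" by (simp add: nn_integral_cmult_indicator)
    finally show False by simp
  qed
  then have "AE \<omega> in M. h \<omega> \<le> C" using AE_space
  proof eventually_elim
    case (elim \<omega>)
    then have \<omega>: "\<omega> \<in> space M" and le: "h \<omega> * indicator A \<omega> \<le> C * indicator A \<omega>" by auto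
    show "h \<omega> \<le> C"
    proof (cases "\<omega> \<in> A")
      case True then show ?thesis using le by simp
    next
      case False then show ?thesis using \<omega> unfolding A_def by (simp add: not_less)
    qed
  qed
  then show ?thesis unfolding h_def f_def C_def .
qed

end

theorem lemmaA3:
  fixes M :: "'a measure" and \<mu> \<nu> :: "real measure"
    and U V W :: "nat \<Rightarrow> 'a \<Rightarrow> real"
    and m0 \<beta> x y :: real and n :: nat
  assumes "prob_space M"
    and "0 < m0" and "m0 \<le> \<beta>"
    \<comment> \<open>(\<mu>, \<nu>) \<in> \<P>\<close>
    and "prob_space \<mu>" and "sets \<mu> = sets borel" and "measure \<mu> {0..\<beta>} = 1"
    and "prob_space \<nu>" and "sets \<nu> = sets borel" and "measure \<nu> {0..\<beta>} = 1"
    and "(\<integral>k. k \<partial>\<mu>) = (\<integral>k. k \<partial>\<nu>)" and "(\<integral>k. k \<partial>\<mu>) \<ge> m0"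
    \<comment> \<open>U_n i.i.d. uniform[0,1]\<close>
    and "\<And>i. U i \<in> borel_measurable M"
    and "prob_space.indep_vars M (\<lambda>_. borel) U UNIV"
    and "\<And>i. distr M borel (U i) = uniform_measure lborel {0..1}"
    \<comment> \<open>(V_n, W_n) i.i.d. with uniform[0,1] marginals\<close>
    and "\<And>i. V i \<in> borel_measurable M" and "\<And>i. W i \<in> borel_measurable M"
    and "prob_space.indep_vars M (\<lambda>_. borel) (\<lambda>i \<omega>. (V i \<omega>, W i \<omega>)) UNIV"
    and "\<And>i. distr M borel (\<lambda>\<omega>. (V i \<omega>, W i \<omega>)) = distr M borel (\<lambda>\<omega>. (V 0 \<omega>, W 0 \<omega>))"
    and "\<And>i. distr M borel (V i) = uniform_measure lborel {0..1}"
    and "\<And>i. distr M borel (W i) = uniform_measure lborel {0..1}"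
    \<comment> \<open>{U_n} independent of {(V_n, W_n)}\<close>
    and "prob_space.indep_set M
           (sigma_sets (space M) (\<Union>i. {U i -` B \<inter> space M | B. B \<in> sets borel}))
           (sigma_sets (space M) (\<Union>i. {(\<lambda>\<omega>. (V i \<omega>, W i \<omega>)) -` B \<inter> space M | B. B \<in> sets borel}))"
    \<comment> \<open>(x, y) \<in> \<S>, D_0 = x + y \<ge> 2\<beta>\<close>
    and "x \<ge> 0" and "y \<ge> 0" and "(x, y) \<noteq> (0, 0)" and "x + y \<ge> 2 * \<beta>"
  shows "AE \<omega> in M.
    nn_cond_exp M (rru_filt M \<mu> \<nu> U V W x y n)
      (\<lambda>\<omega>'. rru_bracket_inf M \<mu> \<nu> U V W x y \<omega>' - ennreal (rru_bracket M \<mu> \<nu> U V W x y n \<omega>')) \<omega>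
    \<le> ennreal (\<beta> / (x + y))"
  proof -
  have b0: "0 < \<beta>" using assms(2,3) by linarith
  interpret rru M \<mu> \<nu> U V W \<beta> x y
    by (rule rru.intro[OF assms(1,4,5,6,7,8,9,12,15,16,19,20,22,23) b0 assms(25)])
  show ?thesis by (rule final)
qed

end
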